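(* Let $\mathbf A$ be a residuated semigroup satisfying $xx=x$ for all $x$. The following are equivalent: (1) $(x/x)y=y(x/x)$ for all $x,y$; (2) $x\backslash x=x/x$ for all $x$; (3) $\mathbf A$ is commutative ($xy=yx$ for all $x,y$). Moreover, each of these conditions implies the conditions (H1), (H2), (H3): for all $x,y$, if $x/x=y/y$ then $(xy)/(xy)=x/x$, $(x/y)/(x/y)=x/x$ and $(x\backslash y)/(x\backslash y)=x/x$.
   Context: A residuated semigroup is a structure $\langle A,\le,\cdot,\backslash,/\rangle$ where $\langle A,\le\rangle$ is a poset, $\langle A,\cdot\rangle$ is a semigroup (we write $xy$ for $x\cdot y$), and for all $x,y,z$: $xy\le z\iff x\le z/y\iff y\le x\backslash z$. *)

theory Defs
  imports Main
begin

text \<open>A residuated semigroup on the carrier type 'a, given by an order le,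
  multiplication m, left residual ld (x\z) and right residual rd (z/y).\<close>
definition residuated_semigroup ::
  "('a \<Rightarrow> 'a \<Rightarrow> bool) \<Rightarrow> ('a \<Rightarrow> 'a \<Rightarrow> 'a) \<Rightarrow> ('a \<Rightarrow> 'a \<Rightarrow> 'a) \<Rightarrow> ('a \<Rightarrow> 'a \<Rightarrow> 'a) \<Rightarrow> bool"
  where "residuated_semigroup le m ld rd \<longleftrightarrow>
     (\<forall>x. le x x) \<and>
     (\<forall>x y. le x y \<and> le y x \<longrightarrow> x = y) \<and>
     (\<forall>x y z. le x y \<and> le y z \<longrightarrow> le x z) \<and>
     (\<forall>x y z. m (m x y) z = m x (m y z)) \<and>
     (\<forall>x y z. (le (m x y) z \<longleftrightarrow> le x (rd z y)) \<and> (le (m x y) z \<longleftrightarrow> le y (ld x z)))"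

end

theory Submission
  imports Defs
begin

locale irs =
  fixes le :: "'a \<Rightarrow> 'a \<Rightarrow> bool" and m ld rd :: "'a \<Rightarrow> 'a \<Rightarrow> 'a"
  assumes rs: "residuated_semigroup le m ld rd"
    and idm: "\<And>x. m x x = x"
begin

lemma refl: "le x x" using rs unfolding residuated_semigroup_def by blast
lemma anti: "le x y \<Longrightarrow> le y x \<Longrightarrow> x = y" using rs unfolding residuated_semigroup_def by blast
lemma tr: "le x y \<Longrightarrow> le y z \<Longrightarrow> le x z" using rs unfolding residuated_semigroup_def by blast
lemmas [trans] = tr
lemma as: "m (m x y) z = m x (m y z)" using rs unfolding residuated_semigroup_def by blast
lemma R1: "le (m x y) z \<longleftrightarrow> le x (rd z y)" using rs unfolding residuated_semigroup_def by blast
lemma R2: "le (m x y) z \<longleftrightarrow> le y (ld x z)" using rs unfolding residuated_semigroup_def by blast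

lemma monl: "le a b \<Longrightarrow> le (m a c) (m b c)"
  by (meson R1 refl tr)
lemma monr: "le a b \<Longrightarrow> le (m c a) (m c b)"
  by (meson R2 refl tr)

lemma rdl: "le (m (rd x y) y) x" using R1 refl by blast
lemma ldl: "le (m y (ld y x)) x" using R2 refl by blast

lemma A:
  assumes C: "\<forall>x y. m (rd x x) y = m y (rd x x)"
  shows "ld x x = rd x x"
proof -
  define u where "u = rd x x"
  define v where "v = ld x x"
  have uv: "le u v"
    unfolding u_def v_def using C rdl R2 by metis
  have xv: "le (m x v) x" unfolding v_def by (rule ldl)
  have x_v: "le x v" unfolding v_def using R2 idm refl by metis
  define w where "w = m v x"
  have x_w: "le x w" unfolding w_def using monl[OF x_v, of x] idm by simp
  define uw where "uw = rd w w"
  have w_uw: "le w uw" unfolding uw_def using R1 idm refl by metis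
  have wx: "m w x = w" unfolding w_def by (simp add: as idm)
  have xw: "m x w = x"
  proof (rule anti)
    show "le (m x w) x" unfolding w_def using monl[OF xv, of x] by (simp add: as idm)
    show "le x (m x w)" using monr[OF x_w, of x] idm by simp
  qed
  have "m x uw = m x (m w uw)" using xw by (metis as)
  also have "\<dots> = m x (m uw w)" using C uw_def by metis
  finally have e1: "m x uw = m x (m uw w)" .
  have "le (m x (m uw w)) (m x w)" using monr[OF rdl[of w w]] uw_def by simp
  then have "le (m x uw) x" using e1 xw by simp
  moreover have "le (m w x) (m uw x)" by (rule monl[OF w_uw])
  moreover have "m uw x = m x uw" using C uw_def by metis
  ultimately have "le w x" using wx tr by metis
  then have "le v u" unfolding u_def using R1 w_def by metis
  then show ?thesis using uv anti u_def v_def by metis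
qed

lemma B1:
  assumes D: "\<forall>x. ld x x = rd x x"
  shows "le (m y x) (m x y)"
proof -
  define z where "z = m x y"
  have "le (m z y) z" unfolding z_def by (simp add: as idm refl)
  then have "le y (rd z z)" using R2 D by metis
  then have 1: "le (m y z) z" using R1 by metis
  have "le (m x z) z" unfolding z_def by (simp add: as[symmetric] idm refl)
  then have "le x (ld z z)" using R1 D by metis
  then have 2: "le (m z x) z" using R2 by metis
  have "m y x = m (m y z) x" unfolding z_def
    by (metis as idm)
  also have "le \<dots> (m z x)" by (rule monl[OF 1])
  finally show ?thesis using 2 z_def tr by metis
qed

lemma comm_ld:
  assumes c: "\<forall>x y. m x y = m y x"
  shows "ld x z = rd z x"
proof (rule anti)
  show "le (ld x z) (rd z x)" using R1 R2 c refl by metis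
  show "le (rd z x) (ld x z)" using R1 R2 c refl by metis
qed

lemma H2:
  assumes c: "\<forall>x y. m x y = m y x" and e: "rd x x = rd y y"
  shows "rd (rd x y) (rd x y) = rd x x"
proof -
  define r where "r = rd x y"
  define s where "s = rd r r"
  have x_e: "le x (rd x x)" using R1 idm refl by metis
  have y_e: "le y (rd y y)" using R1 idm refl by metis
  have ry: "le (m r y) x" unfolding r_def by (rule rdl)
  have es: "le (rd x x) s"
  proof -
    have "le (m (rd x x) (m r y)) (m (rd x x) x)" by (rule monr[OF ry])
    also have "le \<dots> x" by (rule rdl)
    finally have "le (m (m (rd x x) r) y) x" using as tr by metis
    then have "le (m (rd x x) r) r" unfolding r_def using R1 by metis
    then show ?thesis unfolding s_def using R1 by metis
  qed
  have xr: "le x r" unfolding r_def using R1 y_e e rdl c by metis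
  have "m y r = m y (m y r)" by (metis as idm)
  also have "le \<dots> (m y x)" using monr ry c by metis
  also have "le \<dots> y" using x_e e R1 c by metis
  finally have "le (m r y) y" using c by metis
  then have re: "le r (rd x x)" using R1 e by metis
  have "le (m s x) (m s r)" by (rule monr[OF xr])
  also have "le \<dots> r" unfolding s_def by (rule rdl)
  also have "le \<dots> (rd x x)" by (rule re)
  finally have "le (m (m s x) x) x" using R1 by metis
  then have "le (m s x) x" by (simp add: as idm)
  then have "le s (rd x x)" using R1 by metis
  then show ?thesis using es anti r_def s_def by metis
qed

lemma H1:
  assumes c: "\<forall>x y. m x y = m y x" and e: "rd x x = rd y y"
  shows "rd (m x y) (m x y) = rd x x"
proof -
  define t where "t = rd (m x y) (m x y)"
  have x_e: "le x (rd x x)" using R1 idm refl by metis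
  have et: "le (rd x x) t"
  proof -
    have "le (m (m (rd x x) x) y) (m x y)" by (rule monl[OF rdl])
    then show ?thesis unfolding t_def using R1 as by metis
  qed
  have xy: "le (m x y) y" using x_e e R1 by metis
  have "le (m (m t x) y) (m x y)" unfolding t_def using as rdl by metis
  then have "le (m (m t x) y) y" using xy tr by metis
  then have "le (m t x) (rd x x)" using R1 e by metis
  then have "le (m (m t x) x) x" using R1 by metis
  then have "le (m t x) x" by (simp add: as idm)
  then have "le t (rd x x)" using R1 by metis
  then show ?thesis using et anti t_def by metis
qed

end

theorem proposition7p1:
  fixes le :: "'a \<Rightarrow> 'a \<Rightarrow> bool" and m ld rd :: "'a \<Rightarrow> 'a \<Rightarrow> 'a"
  assumes "residuated_semigroup le m ld rd"
    and "\<forall>x. m x x = x"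
  shows "((\<forall>x y. m (rd x x) y = m y (rd x x)) \<longleftrightarrow> (\<forall>x. ld x x = rd x x))
       \<and> ((\<forall>x. ld x x = rd x x) \<longleftrightarrow> (\<forall>x y. m x y = m y x))
       \<and> ((\<forall>x y. m x y = m y x) \<longrightarrow>
            (\<forall>x y. rd x x = rd y y \<longrightarrow>
               rd (m x y) (m x y) = rd x x
             \<and> rd (rd x y) (rd x y) = rd x x
             \<and> rd (ld x y) (ld x y) = rd x x))"
proof -
  interpret irs le m ld rd using assms by unfold_locales auto
  have P23: "(\<forall>x. ld x x = rd x x) \<Longrightarrow> (\<forall>x y. m x y = m y x)"
    using B1 anti by blast
  have P32: "(\<forall>x y. m x y = m y x) \<Longrightarrow> (\<forall>x. ld x x = rd x x)"
    using comm_ld by blast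
  have P12: "(\<forall>x y. m (rd x x) y = m y (rd x x)) \<Longrightarrow> (\<forall>x. ld x x = rd x x)"
    using A by blast
  have P31: "(\<forall>x y. m x y = m y x) \<Longrightarrow> (\<forall>x y. m (rd x x) y = m y (rd x x))"
    by blast
  have H: "(\<forall>x y. m x y = m y x) \<Longrightarrow> rd x x = rd y y \<Longrightarrow>
               rd (m x y) (m x y) = rd x x
             \<and> rd (rd x y) (rd x y) = rd x x
             \<and> rd (ld x y) (ld x y) = rd x x" for x y
  proof -
    assume c: "\<forall>x y. m x y = m y x" and e: "rd x x = rd y y"
    have "rd (ld x y) (ld x y) = rd y y" using comm_ld[OF c] H2[OF c e[symmetric]] by simp
    then show ?thesis using H1[OF c e] H2[OF c e] e by simp
  qed
  show ?thesis using P23 P32 P12 P31 H by blast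
qed

end
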